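(* Let $S$ be a $d$-dimensional space form ($d\ge 2$), i.e. one of: the Euclidean space $\mathbb{R}^d$; the spherical space $\mathbb{S}^d=\{x\in\mathbb{R}^{d+1}:\langle x,x\rangle = C_{\mathbb S}^{-1}\}$ with curvature $C_{\mathbb S}>0$; or the hyperbolic space (Lorentz/'Loid model) $\mathbb{H}^d=\{x\in\mathbb{R}^{d+1}:[x,x]=C_{\mathbb H}^{-1},\ x_1>0\}$ with curvature $C_{\mathbb H}<0$. Then the VC dimension of the class of linear classifiers on $S$ (defined below) equals $\dim(S)+1=d+1$.
   Context: Here $\langle\cdot,\cdot\rangle$ is the standard dot product and $[u,v]=u^{\top}Hv$ with $H=\mathrm{diag}(-1,1,\dots,1)\in\mathbb{R}^{(d+1)\times(d+1)}$ is the Lorentzian inner product. The linear classifiers are: on $\mathbb{R}^d$, $x\mapsto \mathrm{sgn}(w^{\top}x+b)$ with $w\in\mathbb{R}^d$, $\|w\|_2=1$, $b\in\mathbb{R}$; on $\mathbb{S}^d$, $x\mapsto\mathrm{sgn}(\mathrm{asin}(\langle w,x\rangle))$ with $w\in\mathbb{R}^{d+1}$, $\langle w,w\rangle=C_{\mathbb S}$; on $\mathbb{H}^d$, $x\mapsto\mathrm{sgn}(\mathrm{asinh}([w,x]))$ with $w\in\mathbb{R}^{d+1}$, $[w,w]=-C_{\mathbb H}$. The VC dimension of a class of $\{\pm1\}$-valued functions is the largest number of points it shatters. *)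

theory Defs
  imports "HOL-Analysis.Analysis" "HOL-Library.Extended_Nat"
begin

(* Vectors of R^n are represented as functions nat => real vanishing at indices >= n;
   coordinate x_1 of the paper is index 0. *)
definition vecs :: "nat \<Rightarrow> (nat \<Rightarrow> real) set" where
  "vecs n = {x. \<forall>i\<ge>n. x i = 0}"

definition dotp :: "nat \<Rightarrow> (nat \<Rightarrow> real) \<Rightarrow> (nat \<Rightarrow> real) \<Rightarrow> real" where
  "dotp n x y = (\<Sum>i<n. x i * y i)"

definition lor :: "nat \<Rightarrow> (nat \<Rightarrow> real) \<Rightarrow> (nat \<Rightarrow> real) \<Rightarrow> real" where
  "lor n x y = - x 0 * y 0 + (\<Sum>i\<in>{1..<n}. x i * y i)"

(* sign with values in {-1,1}; convention sgn 0 = 1 *)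
definition sgnpm :: "real \<Rightarrow> real" where
  "sgnpm t = (if t \<ge> 0 then 1 else -1)"

definition shatters :: "((nat \<Rightarrow> real) \<Rightarrow> real) set \<Rightarrow> (nat \<Rightarrow> real) set \<Rightarrow> bool" where
  "shatters H A \<longleftrightarrow> (\<forall>l. (\<forall>x\<in>A. l x \<in> {-1, 1}) \<longrightarrow> (\<exists>h\<in>H. \<forall>x\<in>A. h x = l x))"

definition vc_dim :: "((nat \<Rightarrow> real) \<Rightarrow> real) set \<Rightarrow> (nat \<Rightarrow> real) set \<Rightarrow> enat" where
  "vc_dim H X = (SUP A\<in>{A. A \<subseteq> X \<and> finite A \<and> shatters H A}. enat (card A))"

definition euc_space :: "nat \<Rightarrow> (nat \<Rightarrow> real) set" where
  "euc_space d = vecs d"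

definition euc_class :: "nat \<Rightarrow> ((nat \<Rightarrow> real) \<Rightarrow> real) set" where
  "euc_class d = {(\<lambda>x. sgnpm (dotp d w x + b)) | w b. w \<in> vecs d \<and> sqrt (dotp d w w) = 1}"

definition sph_space :: "nat \<Rightarrow> real \<Rightarrow> (nat \<Rightarrow> real) set" where
  "sph_space d C = {x \<in> vecs (d+1). dotp (d+1) x x = 1 / C}"

definition sph_class :: "nat \<Rightarrow> real \<Rightarrow> ((nat \<Rightarrow> real) \<Rightarrow> real) set" where
  "sph_class d C = {(\<lambda>x. sgnpm (arcsin (dotp (d+1) w x))) | w. w \<in> vecs (d+1) \<and> dotp (d+1) w w = C}"

definition hyp_space :: "nat \<Rightarrow> real \<Rightarrow> (nat \<Rightarrow> real) set" where
  "hyp_space d C = {x \<in> vecs (d+1). lor (d+1) x x = 1 / C \<and> x 0 > 0}"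

definition hyp_class :: "nat \<Rightarrow> real \<Rightarrow> ((nat \<Rightarrow> real) \<Rightarrow> real) set" where
  "hyp_class d C = {(\<lambda>x. sgnpm (arsinh (lor (d+1) w x))) | w. w \<in> vecs (d+1) \<and> lor (d+1) w w = - C}"

end

theory Submission
  imports Defs "HOL-Library.Function_Algebras"
begin


definition fsc :: "real \<Rightarrow> (nat \<Rightarrow> real) \<Rightarrow> (nat \<Rightarrow> real)" where
  "fsc c f = (\<lambda>i. c * f i)"

interpretation fv: vector_space fsc
  by unfold_locales (auto simp: fsc_def fun_eq_iff algebra_simps)

lemma sum_fun_apply': "(\<Sum>x\<in>S. (f x :: nat \<Rightarrow> real)) i = (\<Sum>x\<in>S. f x i)"
  by (induction S rule: infinite_finite_induct) auto

definition ev :: "nat \<Rightarrow> nat \<Rightarrow> real" where "ev i = (\<lambda>j. if j = i then 1 else 0)"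

lemma vecs_span: "vecs n \<subseteq> fv.span (ev ` {..<n})"
proof
  fix x assume x: "x \<in> vecs n"
  have "x = (\<Sum>i<n. fsc (x i) (ev i))"
  proof
    fix j
    have "(\<Sum>i<n. fsc (x i) (ev i)) j = (\<Sum>i<n. if i = j then x i else 0)"
      unfolding sum_fun_apply' fsc_def ev_def by (rule sum.cong) auto
    then show "x j = (\<Sum>i<n. fsc (x i) (ev i)) j"
      using x by (auto simp: vecs_def)
  qed
  also have "\<dots> \<in> fv.span (ev ` {..<n})"
    by (intro fv.span_sum fv.span_scale fv.span_base) auto
  finally show "x \<in> fv.span (ev ` {..<n})" .
qed

lemma dep:
  assumes "finite A" "A \<subseteq> vecs n" "card A > n"
  shows "\<exists>t u. t \<subseteq> A \<and> finite t \<and> (\<forall>i. (\<Sum>v\<in>t. u v * v i) = 0) \<and> (\<exists>v\<in>t. u v \<noteq> 0)"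
proof -
  have "fv.dependent A"
  proof (rule ccontr)
    assume ind: "\<not> fv.dependent A"
    have "card A \<le> card (ev ` {..<n})"
      using fv.independent_span_bound[OF _ ind] vecs_span assms(2) by blast
    also have "\<dots> \<le> n" using card_image_le[of "{..<n}" ev] by simp
    finally show False using assms(3) by simp
  qed
  then obtain t u where "finite t" "t \<subseteq> A" "(\<Sum>v\<in>t. fsc (u v) v) = 0" "\<exists>v\<in>t. u v \<noteq> 0"
    unfolding fv.dependent_explicit by blast
  moreover have "\<forall>i. (\<Sum>v\<in>t. u v * v i) = 0"
  proof
    fix i
    have "(\<Sum>v\<in>t. fsc (u v) v) i = 0" using \<open>(\<Sum>v\<in>t. fsc (u v) v) = 0\<close> by simp
    then show "(\<Sum>v\<in>t. u v * v i) = 0" by (simp add: sum_fun_apply' fsc_def)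
  qed
  ultimately show ?thesis by blast
qed



lemma upper:
  assumes fin: "finite A" and sub: "A \<subseteq> vecs n" and sh: "shatters H A"
    and lin: "\<forall>h\<in>H. \<exists>w. \<forall>x\<in>A. h x = sgnpm (dotp n w x)"
  shows "card A \<le> n"
proof (rule ccontr)
  assume "\<not> card A \<le> n"
  then have "n < card A" by simp
  from dep[OF fin sub this] obtain t u where t: "t \<subseteq> A" "finite t" and u0: "\<forall>i. (\<Sum>v\<in>t. u v * v i) = 0"
    and nz: "\<exists>v\<in>t. u v \<noteq> 0"
    by blast
  obtain u' where u': "\<forall>i. (\<Sum>v\<in>t. u' v * v i) = 0" "\<exists>v\<in>t. u' v > 0"
  proof (cases "\<exists>v\<in>t. u v > 0")
    case True then show ?thesis using that[of u] u0 by blast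
  next
    case False
    have "\<forall>i. (\<Sum>v\<in>t. (- u v) * v i) = 0"
      using u0 by (simp add: sum_negf)
    moreover have "\<exists>v\<in>t. - u v > 0" using False nz by force
    ultimately show ?thesis by (rule that[of "\<lambda>v. - u v"])
  qed
  define l where "l x = (if x \<in> t \<and> u' x > 0 then -1 else (1::real))" for x
  have "\<forall>x\<in>A. l x \<in> {-1, 1}" by (simp add: l_def)
  then obtain h where h: "h \<in> H" "\<forall>x\<in>A. h x = l x"
    using sh[unfolded shatters_def, rule_format, of l] by blast
  from lin h(1) obtain w where "\<forall>x\<in>A. h x = sgnpm (dotp n w x)" by blast
  with h(2) have w: "\<forall>x\<in>A. sgnpm (dotp n w x) = l x" by simp
  have le: "u' v * dotp n w v \<le> 0" if "v \<in> t" for v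
  proof -
    have "sgnpm (dotp n w v) = l v" using w t that by blast
    then show ?thesis
      by (cases "u' v > 0") (auto simp: l_def sgnpm_def that mult_le_0_iff split: if_splits)
  qed
  obtain v0 where v0: "v0 \<in> t" "u' v0 > 0" using u' by blast
  have lt: "u' v0 * dotp n w v0 < 0"
  proof -
    have "sgnpm (dotp n w v0) = l v0" using w t v0 by blast
    then show ?thesis using v0 by (auto simp: l_def sgnpm_def split: if_splits intro: mult_pos_neg)
  qed
  have "(\<Sum>v\<in>t. u' v * dotp n w v) < 0"
  proof -
    have "(\<Sum>v\<in>t. u' v * dotp n w v) = u' v0 * dotp n w v0 + (\<Sum>v\<in>t-{v0}. u' v * dotp n w v)"
      using v0 t by (simp add: sum.remove)
    also have "\<dots> < 0" using lt le sum_nonpos[of "t-{v0}" "\<lambda>v. u' v * dotp n w v"] by force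
    finally show ?thesis .
  qed
  moreover have "(\<Sum>v\<in>t. u' v * dotp n w v) = 0"
  proof -
    have "(\<Sum>v\<in>t. u' v * dotp n w v) = (\<Sum>i<n. w i * (\<Sum>v\<in>t. u' v * v i))"
      unfolding dotp_def by (simp add: sum_distrib_left sum.swap[of _ t] algebra_simps)
    also have "\<dots> = 0" using u' by simp
    finally show ?thesis .
  qed
  ultimately show False by simp
qed

lemma vc_eq:
  assumes "\<And>A. A \<subseteq> X \<Longrightarrow> finite A \<Longrightarrow> shatters H A \<Longrightarrow> card A \<le> m"
    and "B \<subseteq> X" "finite B" "shatters H B" "card B = m"
  shows "vc_dim H X = enat m"
  unfolding vc_dim_def
proof (rule antisym)
  show "(SUP A\<in>{A. A \<subseteq> X \<and> finite A \<and> shatters H A}. enat (card A)) \<le> enat m"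
    by (rule SUP_least) (use assms(1) in auto)
  show "enat m \<le> (SUP A\<in>{A. A \<subseteq> X \<and> finite A \<and> shatters H A}. enat (card A))"
    using assms(2-5) by (intro SUP_upper2[of B]) auto
qed

lemma sgnpm_pos_mult: "c > 0 \<Longrightarrow> sgnpm (c * y) = sgnpm y"
  by (auto simp: sgnpm_def zero_le_mult_iff)

lemma sgnpm_pm: "c > 0 \<Longrightarrow> l \<in> {-1,1} \<Longrightarrow> sgnpm (l * c) = l"
  by (auto simp: sgnpm_def)

lemma sgnpm_arcsin: "-1 \<le> y \<Longrightarrow> y \<le> 1 \<Longrightarrow> sgnpm (arcsin y) = sgnpm y"
  using le_arcsin_iff[of y 0] by (auto simp: sgnpm_def)

lemma sgnpm_arsinh: "sgnpm (arsinh y) = sgnpm y"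
  using arsinh_real_neg_iff[of y] by (auto simp: sgnpm_def simp del: arsinh_real_neg_iff)



lemma sq_expand:
  "(\<Sum>i<n. (a * w i + c * x i)^2) = a^2 * dotp n w w + 2*a*c*dotp n w x + c^2 * dotp n x x"
  unfolding dotp_def
  by (simp add: power2_eq_square algebra_simps sum.distrib sum_distrib_left)

lemma sph_bound:
  assumes C: "C > 0" and w: "dotp n w w = C" and x: "dotp n x x = 1/C"
  shows "-1 \<le> dotp n w x \<and> dotp n w x \<le> 1"
proof -
  have sC: "sqrt C > 0" "(sqrt C)^2 = C" using C by auto
  have a2: "(1/sqrt C)^2 = 1/C" using sC by (simp add: power_divide)
  have "0 \<le> (\<Sum>i<n. ((1/sqrt C) * w i + sqrt C * x i)^2)" by (intro sum_nonneg) auto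
  also have "\<dots> = 2 + 2 * dotp n w x"
    unfolding sq_expand using sC C w x a2 by (simp add: field_simps)
  finally have 1: "-1 \<le> dotp n w x" by simp
  have "0 \<le> (\<Sum>i<n. ((1/sqrt C) * w i + (- sqrt C) * x i)^2)" by (intro sum_nonneg) auto
  also have "\<dots> = 2 - 2 * dotp n w x"
    unfolding sq_expand using sC C w x a2 by (simp add: field_simps)
  finally have 2: "dotp n w x \<le> 1" by simp
  from 1 2 show ?thesis by simp
qed

lemma lor_dotp: "n \<ge> 1 \<Longrightarrow> lor n w x = dotp n (w(0 := - w 0)) x"
proof -
  assume n: "n \<ge> 1"
  have "dotp n (w(0 := - w 0)) x = (\<Sum>i\<in>{0..<n}. (w(0 := - w 0)) i * x i)"
    unfolding dotp_def by (simp add: atLeast0LessThan)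
  also have "\<dots> = - w 0 * x 0 + (\<Sum>i\<in>{Suc 0..<n}. (w(0 := - w 0)) i * x i)"
    using n by (subst sum.atLeast_Suc_lessThan) auto
  also have "(\<Sum>i\<in>{Suc 0..<n}. (w(0 := - w 0)) i * x i) = (\<Sum>i\<in>{1..<n}. w i * x i)"
    by (rule sum.cong) auto
  finally have "dotp n (w(0 := - w 0)) x = - w 0 * x 0 + (\<Sum>i\<in>{1..<n}. w i * x i)" .
  then show ?thesis unfolding lor_def by (rule sym)
qed

lemma dotp_Suc: "dotp (Suc n) u y = dotp n u y + u n * y n"
  unfolding dotp_def by simp

lemma shatters_subset: "shatters H A \<Longrightarrow> B \<subseteq> A \<Longrightarrow> shatters H B"
  unfolding shatters_def
proof clarify
  fix l :: "(nat \<Rightarrow> real) \<Rightarrow> real" assume sh: "\<forall>l. (\<forall>x\<in>A. l x \<in> {- 1, 1}) \<longrightarrow> (\<exists>h\<in>H. \<forall>x\<in>A. h x = l x)"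
    and BA: "B \<subseteq> A" and l: "\<forall>x\<in>B. l x \<in> {- 1, 1}"
  define l' where "l' x = (if x \<in> B then l x else 1)" for x
  have "\<forall>x\<in>A. l' x \<in> {- 1, 1}" using l by (simp add: l'_def)
  then obtain h where h: "h \<in> H" "\<forall>x\<in>A. h x = l' x" using sh by blast
  then show "\<exists>h\<in>H. \<forall>x\<in>B. h x = l x" using BA by (intro bexI[of _ h]) (auto simp: l'_def)
qed

lemma euc_upper:
  assumes "A \<subseteq> euc_space d" "finite A" "shatters (euc_class d) A"
  shows "card A \<le> d + 1"
proof -
  define f where "f x = x(d := 1)" for x :: "nat \<Rightarrow> real"
  define g where "g y = y(d := 0)" for y :: "nat \<Rightarrow> real"
  have gf: "g (f x) = x" if "x \<in> vecs d" for x
    using that by (auto simp: f_def g_def vecs_def fun_eq_iff)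
  have inj: "inj_on f A"
    by (rule inj_on_inverseI[where g = g]) (use assms(1) gf in \<open>auto simp: euc_space_def\<close>)
  define H' where "H' = (\<lambda>h. h \<circ> g) ` euc_class d"
  have sub: "f ` A \<subseteq> vecs (d+1)"
    using assms(1) by (auto simp: f_def vecs_def euc_space_def)
  have sh: "shatters H' (f ` A)"
    unfolding shatters_def
  proof clarify
    fix l :: "(nat \<Rightarrow> real) \<Rightarrow> real" assume l: "\<forall>x\<in>f ` A. l x \<in> {- 1, 1}"
    then have "\<forall>x\<in>A. (l \<circ> f) x \<in> {- 1, 1}" by auto
    then obtain h where h: "h \<in> euc_class d" "\<forall>x\<in>A. h x = (l \<circ> f) x"
      using assms(3)[unfolded shatters_def, rule_format, of "l \<circ> f"] by blast
    show "\<exists>h\<in>H'. \<forall>x\<in>f ` A. h x = l x"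
      using h gf assms(1) by (intro bexI[of _ "h \<circ> g"]) (auto simp: H'_def euc_space_def)
  qed
  have lin: "\<forall>h\<in>H'. \<exists>u. \<forall>y\<in>f ` A. h y = sgnpm (dotp (d+1) u y)"
  proof
    fix h' assume "h' \<in> H'"
    then obtain w b where hw: "h' = (\<lambda>x. sgnpm (dotp d w x + b)) \<circ> g"
      unfolding H'_def euc_class_def by blast
    have "\<forall>y\<in>f ` A. h' y = sgnpm (dotp (d+1) (w(d := b)) y)"
    proof
      fix y assume "y \<in> f ` A"
      then obtain x where x: "x \<in> A" "y = f x" by blast
      have "dotp (d+1) (w(d := b)) y = dotp d w x + b"
      proof -
        have "dotp d (w(d := b)) (f x) = dotp d w x"
          unfolding dotp_def f_def by (rule sum.cong) auto
        then show ?thesis using x by (simp add: dotp_Suc f_def)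
      qed
      moreover have "g y = x" using x gf assms(1) by (auto simp: euc_space_def)
      ultimately show "h' y = sgnpm (dotp (d+1) (w(d := b)) y)" using hw by simp
    qed
    then show "\<exists>u. \<forall>y\<in>f ` A. h' y = sgnpm (dotp (d+1) u y)" by blast
  qed
  have "card (f ` A) \<le> d + 1"
    using upper[OF _ sub sh lin] assms(2) by simp
  then show ?thesis using card_image[OF inj] by simp
qed

lemma sph_upper:
  assumes C: "C > 0" and "A \<subseteq> sph_space d C" "finite A" "shatters (sph_class d C) A"
  shows "card A \<le> d + 1"
proof (rule upper[OF assms(3) _ assms(4)])
  show "A \<subseteq> vecs (d+1)" using assms(2) by (auto simp: sph_space_def)
  show "\<forall>h\<in>sph_class d C. \<exists>w. \<forall>x\<in>A. h x = sgnpm (dotp (d + 1) w x)"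
  proof
    fix h assume "h \<in> sph_class d C"
    then obtain w where w: "h = (\<lambda>x. sgnpm (arcsin (dotp (d+1) w x)))" "dotp (d+1) w w = C"
      unfolding sph_class_def by blast
    have "\<forall>x\<in>A. h x = sgnpm (dotp (d + 1) w x)"
    proof
      fix x assume "x \<in> A"
      then have "dotp (d+1) x x = 1/C" using assms(2) by (auto simp: sph_space_def)
      then show "h x = sgnpm (dotp (d + 1) w x)"
        using sph_bound[OF C w(2)] w(1) sgnpm_arcsin by simp
    qed
    then show "\<exists>w. \<forall>x\<in>A. h x = sgnpm (dotp (d + 1) w x)" by blast
  qed
qed

lemma hyp_upper:
  assumes "A \<subseteq> hyp_space d C" "finite A" "shatters (hyp_class d C) A"
  shows "card A \<le> d + 1"
proof (rule upper[OF assms(2) _ assms(3)])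
  show "A \<subseteq> vecs (d+1)" using assms(1) by (auto simp: hyp_space_def)
  show "\<forall>h\<in>hyp_class d C. \<exists>w. \<forall>x\<in>A. h x = sgnpm (dotp (d + 1) w x)"
  proof
    fix h assume "h \<in> hyp_class d C"
    then obtain w where w: "h = (\<lambda>x. sgnpm (arsinh (lor (d+1) w x)))"
      unfolding hyp_class_def by blast
    have "\<forall>x\<in>A. h x = sgnpm (dotp (d + 1) (w(0 := - w 0)) x)"
      using w by (simp add: sgnpm_arsinh lor_dotp)
    then show "\<exists>w. \<forall>x\<in>A. h x = sgnpm (dotp (d + 1) w x)" by blast
  qed
qed



lemma dotp_ev: "i < n \<Longrightarrow> dotp n v (ev i) = v i"
proof -
  assume i: "i < n"
  have "dotp n v (ev i) = (\<Sum>j<n. if j = i then v j else 0)"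
    unfolding dotp_def ev_def by (rule sum.cong) auto
  then show ?thesis using i by simp
qed

lemma dotp_scale_right: "dotp n v (\<lambda>j. s * x j) = s * dotp n v x"
  unfolding dotp_def by (simp add: sum_distrib_left algebra_simps)

lemma dotp_scale_left: "dotp n (\<lambda>j. s * x j) v = s * dotp n x v"
  unfolding dotp_def by (simp add: sum_distrib_left algebra_simps)

lemma ev_vecs: "i < n \<Longrightarrow> ev i \<in> vecs n"
  by (auto simp: ev_def vecs_def)

lemma ev_inj: "inj ev"
proof (rule injI)
  fix i j assume "ev i = ev j"
  then have "ev i i = ev j i" by simp
  then show "i = j" by (auto simp: ev_def split: if_splits)
qed

lemma pm_cases: "l \<in> {-1, 1::real} \<Longrightarrow> l = -1 \<or> l = 1" by auto

lemma euc_lower: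
  assumes d: "d \<ge> 1"
  shows "\<exists>B. B \<subseteq> euc_space d \<and> finite B \<and> shatters (euc_class d) B \<and> card B = d + 1"
proof -
  define z :: "nat \<Rightarrow> real" where "z = (\<lambda>_. 0)"
  define B where "B = insert z (ev ` {..<d})"
  have zn: "z \<notin> ev ` {..<d}"
  proof
    assume "z \<in> ev ` {..<d}"
    then obtain i where "z = ev i" by blast
    then have "z i = ev i i" by simp
    then show False by (simp add: z_def ev_def)
  qed
  have cardB: "card B = d + 1"
    unfolding B_def using zn card_image[OF inj_on_subset[OF ev_inj, of "{..<d}"]] by simp
  have subB: "B \<subseteq> euc_space d"
    unfolding B_def euc_space_def using ev_vecs by (auto simp: z_def vecs_def)
  have shB: "shatters (euc_class d) B"
    unfolding shatters_def
  proof clarify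
    fix l :: "(nat \<Rightarrow> real) \<Rightarrow> real" assume l: "\<forall>x\<in>B. l x \<in> {- 1, 1}"
    define L0 where "L0 = l z"
    have L0: "L0 \<in> {-1, 1}" using l by (simp add: L0_def B_def)
    have Li: "l (ev i) \<in> {-1,1}" if "i < d" for i using l that by (simp add: B_def)
    define v where "v j = (if j < d then 2 * l (ev j) - L0 else 0)" for j
    have v0: "v 0 \<noteq> 0" using Li[of 0] L0 d by (auto simp: v_def)
    have "v 0 * v 0 \<le> dotp d v v"
      unfolding dotp_def using d by (intro member_le_sum[of 0 "{..<d}" "\<lambda>j. v j * v j"]) auto
    moreover have "v 0 * v 0 > 0" using v0 by (metis not_real_square_gt_zero)
    ultimately have vv: "dotp d v v > 0" by linarith
    define N where "N = sqrt (dotp d v v)"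
    have N: "N > 0" "N * N = dotp d v v" using vv by (auto simp: N_def)
    define w where "w j = v j / N" for j
    have w_eq: "w = (\<lambda>j. (1/N) * v j)" by (auto simp: w_def)
    have ww: "dotp d w w = 1"
      unfolding w_eq dotp_scale_left dotp_scale_right using N vv by (simp add: field_simps)
    have wv: "w \<in> vecs d" by (auto simp: w_def v_def vecs_def)
    define h where "h x = sgnpm (dotp d w x + L0 / N)" for x
    have hin: "h \<in> euc_class d"
      unfolding euc_class_def h_def using ww wv by auto
    have hx: "h x = sgnpm (dotp d v x + L0)" for x
    proof -
      have eq: "dotp d w x + L0 / N = (1/N) * (dotp d v x + L0)"
        unfolding w_eq dotp_scale_left by (simp add: add_divide_distrib)
      show ?thesis unfolding h_def eq by (rule sgnpm_pos_mult) (use N in simp)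
    qed
    have "\<forall>x\<in>B. h x = l x"
    proof
      fix x assume "x \<in> B"
      then consider "x = z" | i where "i < d" "x = ev i" unfolding B_def by blast
      then show "h x = l x"
      proof cases
        case 1
        have "dotp d v z = 0" by (simp add: dotp_def z_def)
        then show ?thesis using 1 hx sgnpm_pm[of 1 L0] L0 by (simp add: L0_def)
      next
        case 2
        have "dotp d v x + L0 = l (ev i) * 2" using 2 dotp_ev[of i d v] by (simp add: v_def)
        then show ?thesis using 2 hx sgnpm_pm[of 2 "l (ev i)"] Li[of i] by simp
      qed
    qed
    then show "\<exists>h\<in>euc_class d. \<forall>x\<in>B. h x = l x" using hin by blast
  qed
  show ?thesis using cardB subB shB by (intro exI[of _ B]) (auto simp: B_def)
qed



lemma sph_lower:
  assumes C: "C > 0"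
  shows "\<exists>B. B \<subseteq> sph_space d C \<and> finite B \<and> shatters (sph_class d C) B \<and> card B = d + 1"
proof -
  define s where "s = 1 / sqrt C"
  have s: "s > 0" "s * s = 1 / C" using C by (auto simp: s_def)
  define q where "q i = (\<lambda>j. s * ev i j)" for i
  have dq: "dotp n v (q i) = s * v i" if "i < n" for n v i
    unfolding q_def dotp_scale_right dotp_ev[OF that] ..
  have qinj: "inj q"
  proof (rule injI)
    fix i j assume "q i = q j"
    then have "q i i = q j i" by simp
    then show "i = j" using s by (auto simp: q_def ev_def split: if_splits)
  qed
  define B where "B = q ` {..<d+1}"
  have cardB: "card B = d + 1"
    unfolding B_def using card_image[OF inj_on_subset[OF qinj, of "{..<d+1}"]] by simp
  have qv: "q i \<in> vecs (d+1)" if "i < d+1" for i using that by (auto simp: q_def ev_def vecs_def)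
  have qq: "dotp (d+1) (q i) (q i) = 1/C" if "i < d+1" for i
    using dq[OF that] s by (simp add: q_def ev_def)
  have subB: "B \<subseteq> sph_space d C"
    unfolding B_def sph_space_def using qv qq by auto
  have shB: "shatters (sph_class d C) B"
    unfolding shatters_def
  proof clarify
    fix l :: "(nat \<Rightarrow> real) \<Rightarrow> real" assume l: "\<forall>x\<in>B. l x \<in> {- 1, 1}"
    have Li: "l (q i) \<in> {-1,1}" if "i < d+1" for i using l that by (simp add: B_def)
    define a where "a = sqrt (C / (d+1))"
    have a: "a > 0" "a * a = C / (d+1)" using C by (auto simp: a_def)
    define w where "w j = (if j < d+1 then a * l (q j) else 0)" for j
    have "dotp (d+1) w w = (\<Sum>j<d+1. a * a)"
      unfolding dotp_def
    proof (rule sum.cong)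
      fix j assume "j \<in> {..<d+1}"
      then have "l (q j) * l (q j) = 1" using Li[of j] by auto
      then show "w j * w j = a * a" using \<open>j \<in> {..<d+1}\<close> by (simp add: w_def algebra_simps)
    qed simp
    also have "\<dots> = C" using a by simp
    finally have ww: "dotp (d+1) w w = C" .
    have wv: "w \<in> vecs (d+1)" by (auto simp: w_def vecs_def)
    define h where "h x = sgnpm (arcsin (dotp (d+1) w x))" for x
    have hin: "h \<in> sph_class d C"
      unfolding sph_class_def h_def using ww wv by auto
    have "\<forall>x\<in>B. h x = l x"
    proof
      fix x assume "x \<in> B"
      then obtain i where i: "i < d+1" "x = q i" unfolding B_def by blast
      have "h x = sgnpm (dotp (d+1) w x)"
        unfolding h_def using sph_bound[OF C ww qq[OF i(1)]] i sgnpm_arcsin by simp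
      also have "dotp (d+1) w x = l (q i) * (s * a)" using dq[OF i(1)] i by (simp add: w_def)
      also have "sgnpm \<dots> = l x" using sgnpm_pm[of "s*a" "l (q i)"] Li[OF i(1)] s a i by simp
      finally show "h x = l x" .
    qed
    then show "\<exists>h\<in>sph_class d C. \<forall>x\<in>B. h x = l x" using hin by blast
  qed
  show ?thesis using cardB subB shB by (intro exI[of _ B]) (auto simp: B_def)
qed



lemma lor_scale_left: "lor n (\<lambda>j. c * w j) x = c * lor n w x"
  unfolding lor_def by (simp add: sum_distrib_left algebra_simps)

lemma lor_scale_both: "lor n (\<lambda>j. c * w j) (\<lambda>j. c * w j) = c^2 * lor n w w"
  unfolding lor_def by (simp add: sum_distrib_left algebra_simps power2_eq_square)

lemma hyp_lower:
  assumes C: "C < 0" and d: "d \<ge> 2"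
  shows "\<exists>B. B \<subseteq> hyp_space d C \<and> finite B \<and> shatters (hyp_class d C) B \<and> card B = d + 1"
proof -
  define K where "K = - 1 / C"
  have K: "K > 0" using C by (simp add: K_def)
  define r where "r = sqrt K"
  define s where "s = sqrt (K + 1)"
  have rs: "r > 0" "s > 0" "r * r = K" "s * s = K + 1" "r < s" using K by (auto simp: r_def s_def)
  define P where "P i = (\<lambda>j. if j = 0 then (if i = 0 then r else s) else ev i j)" for i
  have lorP: "lor n w (P i) = - w 0 * (if i = 0 then r else s) + (if 1 \<le> i \<and> i < n then w i else 0)"
    for n w i
  proof -
    have "(\<Sum>j\<in>{1..<n}. w j * P i j) = (\<Sum>j\<in>{1..<n}. if j = i then w j else 0)"
      by (rule sum.cong) (auto simp: P_def ev_def)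
    also have "\<dots> = (if 1 \<le> i \<and> i < n then w i else 0)" by simp
    finally show ?thesis unfolding lor_def by (simp add: P_def)
  qed
  have Pinj: "inj P"
  proof (rule injI)
    fix i j assume eq: "P i = P j"
    show "i = j"
    proof (cases "i = 0 \<or> j = 0")
      case True
      have "P i 0 = P j 0" using eq by simp
      then show ?thesis using True rs by (auto simp: P_def split: if_splits)
    next
      case False
      have "P i i = P j i" using eq by simp
      then show ?thesis using False by (auto simp: P_def ev_def split: if_splits)
    qed
  qed
  define B where "B = P ` {..<d+1}"
  have cardB: "card B = d + 1"
    unfolding B_def using card_image[OF inj_on_subset[OF Pinj, of "{..<d+1}"]] by simp
  have Pv: "P i \<in> vecs (d+1)" if "i < d+1" for i using that by (auto simp: P_def ev_def vecs_def)
  have PP: "lor (d+1) (P i) (P i) = 1/C" if "i < d+1" for i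
  proof -
    have "lor (d+1) (P i) (P i) = - K"
      using that rs unfolding lorP by (auto simp: P_def ev_def)
    then show ?thesis using C by (simp add: K_def)
  qed
  have P0: "P i 0 > 0" for i using rs by (simp add: P_def)
  have subB: "B \<subseteq> hyp_space d C"
    unfolding B_def hyp_space_def using Pv PP P0 by auto
  have shB: "shatters (hyp_class d C) B"
    unfolding shatters_def
  proof clarify
    fix l :: "(nat \<Rightarrow> real) \<Rightarrow> real" assume l: "\<forall>x\<in>B. l x \<in> {- 1, 1}"
    define L where "L i = l (P i)" for i
    have Li: "L i \<in> {-1,1}" if "i < d+1" for i using l that by (simp add: B_def L_def)
    define w where "w j = (if j = 0 then - L 0 else if j < d+1 then L j * (s+1) - L 0 * s else 0)" for j
    have wj: "w j * w j \<ge> 1" if "j \<in> {1..<d+1}" for j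
    proof -
      have "L j \<in> {-1,1}" "L 0 \<in> {-1,1}" using Li that by auto
      then show ?thesis using that rs(2) by (auto simp: w_def algebra_simps)
    qed
    have "lor (d+1) w w = - (w 0 * w 0) + (\<Sum>j\<in>{1..<d+1}. w j * w j)"
      unfolding lor_def by simp
    moreover have "(\<Sum>j\<in>{1..<d+1}. w j * w j) \<ge> (\<Sum>j\<in>{1..<d+1}. 1)"
      by (rule sum_mono) (use wj in auto)
    moreover have "w 0 * w 0 = 1" using Li[of 0] by (auto simp: w_def)
    ultimately have Q: "lor (d+1) w w \<ge> real d - 1" by simp
    define Q where "Q = lor (d+1) w w"
    have Qp: "Q > 0" using Q d unfolding Q_def by simp
    define c where "c = sqrt (- C / Q)"
    have CQ: "C / Q < 0" using Qp C by (simp add: divide_neg_pos)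
    have c: "c > 0" "c^2 = - C / Q" using CQ by (auto simp: c_def)
    define w' where "w' j = c * w j" for j
    have w'eq: "w' = (\<lambda>j. c * w j)" by (auto simp: w'_def)
    have ww: "lor (d+1) w' w' = - C"
      unfolding w'eq lor_scale_both using c Qp by (simp add: Q_def)
    have wv: "w' \<in> vecs (d+1)" by (auto simp: w'_def w_def vecs_def)
    define h where "h x = sgnpm (arsinh (lor (d+1) w' x))" for x
    have hin: "h \<in> hyp_class d C"
      unfolding hyp_class_def h_def using ww wv by auto
    have "\<forall>x\<in>B. h x = l x"
    proof
      fix x assume "x \<in> B"
      then obtain i where i: "i < d+1" "x = P i" unfolding B_def by blast
      have "h x = sgnpm (lor (d+1) w x)"
        unfolding h_def sgnpm_arsinh w'eq lor_scale_left using c by (simp add: sgnpm_pos_mult)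
      also have "\<dots> = l x"
      proof (cases "i = 0")
        case True
        have "lor (d+1) w x = L 0 * r" using i True by (simp add: lorP w_def)
        then show ?thesis using sgnpm_pm[of r "L 0"] Li[of 0] rs i True by (simp add: L_def)
      next
        case False
        have "lor (d+1) w x = L i * (s + 1)" using i False by (simp add: lorP w_def algebra_simps)
        then show ?thesis using sgnpm_pm[of "s+1" "L i"] Li[of i] rs i by (simp add: L_def)
      qed
      finally show "h x = l x" .
    qed
    then show "\<exists>h\<in>hyp_class d C. \<forall>x\<in>B. h x = l x" using hin by blast
  qed
  show ?thesis using cardB subB shB by (intro exI[of _ B]) (auto simp: B_def)
qed


theorem theorem1:
  fixes d :: nat
  assumes "d \<ge> 2"
  shows "vc_dim (euc_class d) (euc_space d) = enat (d + 1)
       \<and> (\<forall>C::real. C > 0 \<longrightarrow> vc_dim (sph_class d C) (sph_space d C) = enat (d + 1))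
       \<and> (\<forall>C::real. C < 0 \<longrightarrow> vc_dim (hyp_class d C) (hyp_space d C) = enat (d + 1))"
proof (intro conjI allI impI)
  have d1: "d \<ge> 1" using assms by simp
  from euc_lower[OF d1] obtain B where "B \<subseteq> euc_space d" "finite B" "shatters (euc_class d) B" "card B = d + 1"
    by blast
  then show "vc_dim (euc_class d) (euc_space d) = enat (d + 1)"
    using euc_upper by (intro vc_eq) auto
next
  fix C :: real assume C: "C > 0"
  obtain B where "B \<subseteq> sph_space d C" "finite B" "shatters (sph_class d C) B" "card B = d + 1"
    using sph_lower[OF C] by blast
  then show "vc_dim (sph_class d C) (sph_space d C) = enat (d + 1)"
    using sph_upper[OF C] by (intro vc_eq) auto
next
  fix C :: real assume C: "C < 0"
  obtain B where "B \<subseteq> hyp_space d C" "finite B" "shatters (hyp_class d C) B" "card B = d + 1"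
    using hyp_lower[OF C assms] by blast
  then show "vc_dim (hyp_class d C) (hyp_space d C) = enat (d + 1)"
    using hyp_upper by (intro vc_eq) auto
qed

end
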